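(* Consider $N$ robots; robot $i$ has joint vector $q_i(t)\in\mathbb{R}^{n_i}$, end-effector configuration $x_i=x_i(q_i)\in\mathbb{R}^p$ with Jacobian $J_i(q_i)\in\mathbb{R}^{p\times n_i}$, and let $x=(x_1^{\rm T},\dots,x_N^{\rm T})^{\rm T}$. A cooperative task is $\sigma=J_\sigma x\in\mathbb{R}^m$ with a constant matrix $J_\sigma\in\mathbb{R}^{m\times Np}$. Let $\sigma_n(\cdot)$ be a twice continuously differentiable nominal path and let the reference be $\sigma_r(t)=\sigma_n(s_r(t))$ for a twice differentiable scalar path parameter $s_r(t)$, so that $\dot\sigma_r=\frac{\partial\sigma_r}{\partial s_r}\dot s_r$ and $\ddot\sigma_r=\frac{\partial^2\sigma_r}{\partial s_r^2}\dot s_r^2+\frac{\partial\sigma_r}{\partial s_r}\ddot s_r$. Assume the joint accelerations of robot $i$ are $$\ddot q_i=J_i^\dagger\Big(\Gamma_i J_\sigma^\dagger\big(\ddot\sigma_r+k_\sigma\dot{\tilde\sigma}+\lambda_\sigma\tilde\sigma\big)-\dot J_i\dot q_i\Big)+\ddot q_{n,i},$$ where $\tilde\sigma=\sigma_r-\sigma$, $k_\sigma,\lambda_\sigma>0$, $\dagger$ denotes the Moore–Penrose pseudoinverse, $\Gamma_i\in\mathbb{R}^{p\times Np}$ is the block-row matrix with identity $I_p$ in the $i$-th block and zero blocks elsewhere, and $\ddot q_{n,i}\in\mathbb{R}^{n_i}$ is an arbitrary vector with $J_i\ddot q_{n,i}=0$ (not depending on $\ddot s_r$). Let the human position $p_o(t)\in\mathbb{R}^3$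 be a given twice differentiable signal. For a point $p\in\mathbb{R}^3$ with velocity $\dot p$, define the safety index $f(p,\dot p,p_o,\dot p_o)=\alpha_1(d)+\alpha_2(d,\dot d)$, where $d=\|p-p_o\|$, $\alpha_1$ is a nonnegative continuous monotonically increasing function of $d$, and $\alpha_2$ is continuous and monotonically increasing in $\dot d$ with $\lim_{\dot d\to+\infty}\alpha_2(d,\dot d)=c\in\mathbb{R}^+$ for all $d$ and $\partial\alpha_2/\partial\dot d\neq 0$ for all $d$ and finite $\dot d$. For robot $i$, the $l$-th link ($l=1,\dots,n_l^i+1$, the last one being a virtual link) is modelled as the segment between points $p^i_{l,0}(q_i)$ and $p^i_{l,1}(q_i)$; set $p^i_{l,r}=p^i_{l,0}+r(p^i_{l,1}-p^i_{l,0})$, $r\in[0,1]$, and define $$F^i=\sum_{l=1}^{n_l^i+1}\int_0^1 f\big(p^i_{l,r},\dot p^i_{l,r},p_o,\dot p_o\big)\,dr .$$ Then the time derivative of $F^i$ is affine in the path-parameter acceleration: there exist scalars $\mu_1^i,\mu_2^i\in\mathbb{R}$, not depending on $\ddot s_r$ (with $\mu_1^i$ depending on $q_i,\dot q_i,p_o,\dot p_o,s_r$ and $\mu_2^i$ additionally on $\ddot p_o,\ddot q_{n,i},\dot s_r$ and the task tracking error), such that $$\dot F^i=\mu_1^i\,\ddot s_r+\mu_2^i .$$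
   Context: Here $\dot d$ denotes the time derivative of the distance $d$. The positional Jacobian of the point $p^i_{l,r}$ is $J^i_{l,r}(q_i)\in\mathbb{R}^{3\times n_i}$, so that $\ddot p^i_{l,r}=J^i_{l,r}\ddot q_i+\dot J^i_{l,r}\dot q_i$. The functions $\alpha_1,\alpha_2$ are taken differentiable and all distances $d=\|p^i_{l,r}-p_o\|$ are assumed nonzero, so that all derivatives involved exist. *)

theory Defs
  imports "HOL-Analysis.Analysis"
begin

definition pinv :: "real^'n^'m \<Rightarrow> real^'m^'n" where
  "pinv A = (THE X. A ** X ** A = A \<and> X ** A ** X = X \<and>
                    transpose (A ** X) = A ** X \<and> transpose (X ** A) = X ** A)"

definition Gamma :: "'N::finite \<Rightarrow> real^('N \<times> 'p::finite)^'p" where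
  "Gamma i = (\<chi> a. \<chi> jb. if fst jb = i \<and> snd jb = a then 1 else 0)"

definition dist_ho :: "real^3 \<Rightarrow> real^3 \<Rightarrow> real" where
  "dist_ho p po = norm (p - po)"

definition dist_rate :: "real^3 \<Rightarrow> real^3 \<Rightarrow> real^3 \<Rightarrow> real^3 \<Rightarrow> real" where
  "dist_rate p pd po pod = ((p - po) \<bullet> (pd - pod)) / norm (p - po)"

definition safety_index ::
  "(real \<Rightarrow> real) \<Rightarrow> (real \<Rightarrow> real \<Rightarrow> real) \<Rightarrow> real^3 \<Rightarrow> real^3 \<Rightarrow> real^3 \<Rightarrow> real^3 \<Rightarrow> real" where
  "safety_index \<alpha>1 \<alpha>2 p pd po pod =
     \<alpha>1 (dist_ho p po) + \<alpha>2 (dist_ho p po) (dist_rate p pd po pod)"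

definition link_point :: "(nat \<Rightarrow> 'q \<Rightarrow> real^3) \<Rightarrow> (nat \<Rightarrow> 'q \<Rightarrow> real^3) \<Rightarrow> nat \<Rightarrow> real \<Rightarrow> 'q \<Rightarrow> real^3" where
  "link_point P0 P1 l r q = P0 l q + r *\<^sub>R (P1 l q - P0 l q)"

definition link_jac :: "(nat \<Rightarrow> 'q \<Rightarrow> real^'n^3) \<Rightarrow> (nat \<Rightarrow> 'q \<Rightarrow> real^'n^3) \<Rightarrow> nat \<Rightarrow> real \<Rightarrow> 'q \<Rightarrow> real^'n^3" where
  "link_jac JP0 JP1 l r q = JP0 l q + r *\<^sub>R (JP1 l q - JP0 l q)"

definition F_index ::
  "(real \<Rightarrow> real) \<Rightarrow> (real \<Rightarrow> real \<Rightarrow> real) \<Rightarrow> nat \<Rightarrow>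
   (nat \<Rightarrow> real^'n \<Rightarrow> real^3) \<Rightarrow> (nat \<Rightarrow> real^'n \<Rightarrow> real^3) \<Rightarrow>
   (nat \<Rightarrow> real^'n \<Rightarrow> real^'n^3) \<Rightarrow> (nat \<Rightarrow> real^'n \<Rightarrow> real^'n^3) \<Rightarrow>
   real^'n \<Rightarrow> real^'n \<Rightarrow> real^3 \<Rightarrow> real^3 \<Rightarrow> real" where
  "F_index \<alpha>1 \<alpha>2 nl P0 P1 JP0 JP1 q qd po pod =
     (\<Sum>l = 1..nl + 1. integral {0..1} (\<lambda>r.
        safety_index \<alpha>1 \<alpha>2 (link_point P0 P1 l r q) (link_jac JP0 JP1 l r q *v qd) po pod))"

end

theory Submission
  imports Defs
begin

lemma mv_bb: "bounded_bilinear (\<lambda>(A::real^'a^'b) (v::real^'a). A *v v)"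
  unfolding bilinear_conv_bounded_bilinear[symmetric] bilinear_def
  by (auto intro!: linearI simp: algebra_simps vec_eq_iff matrix_vector_mult_def sum_distrib_left sum.distrib)

lemma scaleR_mv[simp]: "(r *\<^sub>R (A::real^'a^'b)) *v v = r *\<^sub>R (A *v v)"
  by (simp add: vec_eq_iff matrix_vector_mult_def sum_distrib_left mult.assoc)

definition SD :: "(real \<Rightarrow> real) \<Rightarrow> (real \<Rightarrow> real \<Rightarrow> real) \<Rightarrow> (real \<Rightarrow> real \<Rightarrow> real) \<Rightarrow>
   'v::real_inner \<Rightarrow> 'v \<Rightarrow> 'v \<Rightarrow> 'v \<Rightarrow> real" where
  "SD a1' d1 d2 e w de dw = a1' (norm e) * ((de \<bullet> e) / norm e)
     + (d1 (norm e) ((e \<bullet> w) / norm e) * ((de \<bullet> e) / norm e)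
      + d2 (norm e) ((e \<bullet> w) / norm e) *
        (((de \<bullet> w + e \<bullet> dw) * norm e - (e \<bullet> w) * ((de \<bullet> e) / norm e)) / (norm e * norm e)))"

lemma SD_deriv:
  fixes E W :: "'a::real_normed_vector \<Rightarrow> 'v::real_inner"
  assumes a1: "\<And>d. (\<alpha>1 has_real_derivative \<alpha>1' d) (at d)"
    and a2: "\<And>d dd. ((\<lambda>(x, y). \<alpha>2 x y) has_derivative
                          (\<lambda>(h, k). D1\<alpha>2 d dd * h + D2\<alpha>2 d dd * k)) (at (d, dd))"
    and E: "(E has_derivative DE) (at x)" and W: "(W has_derivative DW) (at x)"
    and nz: "E x \<noteq> 0"
  shows "((\<lambda>x. \<alpha>1 (norm (E x)) + \<alpha>2 (norm (E x)) ((E x \<bullet> W x) / norm (E x)))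
    has_derivative (\<lambda>h. SD \<alpha>1' D1\<alpha>2 D2\<alpha>2 (E x) (W x) (DE h) (DW h))) (at x)"
proof -
  have a2c: "((\<lambda>x. \<alpha>2 (f x) (g x)) has_derivative (\<lambda>h. D1\<alpha>2 (f x) (g x) * f' h + D2\<alpha>2 (f x) (g x) * g' h)) (at x)"
    if "(f has_derivative f') (at x)" "(g has_derivative g') (at x)" for f g f' g' and x :: 'a
    using has_derivative_compose[OF has_derivative_Pair[OF that] a2] by simp
  have hn: "((\<lambda>x. norm (E x)) has_derivative (\<lambda>h. DE h \<bullet> sgn (E x))) (at x)"
    using has_derivative_compose[OF E has_derivative_norm[OF nz]] .
  have n0: "norm (E x) \<noteq> 0" using nz by simp
  have hi: "((\<lambda>x. E x \<bullet> W x) has_derivative (\<lambda>h. E x \<bullet> DW h + DE h \<bullet> W x)) (at x)"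
    by (rule has_derivative_inner[OF E W])
  have hd: "((\<lambda>x. (E x \<bullet> W x) / norm (E x)) has_derivative
     (\<lambda>h. ((E x \<bullet> DW h + DE h \<bullet> W x) * norm (E x) - (E x \<bullet> W x) * (DE h \<bullet> sgn (E x))) / (norm (E x) * norm (E x)))) (at x)"
    by (rule has_derivative_divide'[OF hi hn n0])
  have h1: "((\<lambda>x. \<alpha>1 (norm (E x))) has_derivative (\<lambda>h. \<alpha>1' (norm (E x)) * (DE h \<bullet> sgn (E x)))) (at x)"
    using has_derivative_compose[OF hn a1[unfolded has_field_derivative_def]] by (simp add: mult.commute)
  note h2 = a2c[OF hn hd]
  show ?thesis
    apply (rule has_derivative_eq_rhs[OF has_derivative_add[OF h1 h2]])
    apply (simp add: SD_def fun_eq_iff sgn_div_norm inner_commute divide_inverse)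
    done
qed

lemma SD_cont:
  fixes e w de dw :: "'a::topological_space \<Rightarrow> 'v::real_inner"
  assumes a1: "continuous_on UNIV a1'"
    and d1: "continuous_on UNIV (\<lambda>(d, dd). d1 d dd)"
    and d2: "continuous_on UNIV (\<lambda>(d, dd). d2 d dd)"
    and c: "continuous_on S e" "continuous_on S w" "continuous_on S de" "continuous_on S dw"
    and nz: "\<And>z. z \<in> S \<Longrightarrow> e z \<noteq> 0"
  shows "continuous_on S (\<lambda>z. SD a1' d1 d2 (e z) (w z) (de z) (dw z))"
proof -
  have n0: "\<And>z. z \<in> S \<Longrightarrow> norm (e z) \<noteq> 0" using nz by simp
  have cn: "continuous_on S (\<lambda>z. norm (e z))" by (intro continuous_intros c)
  have cdd: "continuous_on S (\<lambda>z. (e z \<bullet> w z) / norm (e z))"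
    by (intro continuous_intros c) (simp add: nz)
  have ca1: "continuous_on S (\<lambda>z. a1' (norm (e z)))"
    using continuous_on_compose2[OF a1 cn] by simp
  have cd1: "continuous_on S (\<lambda>z. d1 (norm (e z)) ((e z \<bullet> w z) / norm (e z)))"
    using continuous_on_compose2[OF d1 continuous_on_Pair[OF cn cdd]] by simp
  have cd2: "continuous_on S (\<lambda>z. d2 (norm (e z)) ((e z \<bullet> w z) / norm (e z)))"
    using continuous_on_compose2[OF d2 continuous_on_Pair[OF cn cdd]] by simp
  show ?thesis unfolding SD_def
    by (intro continuous_intros c ca1 cd1 cd2) (auto simp add: nz)
qed


type_synonym 'n st = "(real^'n) \<times> (real^'n) \<times> (real^3) \<times> (real^3)"

definition Ef :: "(nat \<Rightarrow> real^'n \<Rightarrow> real^3) \<Rightarrow> (nat \<Rightarrow> real^'n \<Rightarrow> real^3) \<Rightarrow> nat \<Rightarrow> real \<Rightarrow> 'n st \<Rightarrow> real^3" where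
  "Ef P0 P1 l r x = link_point P0 P1 l r (fst x) - fst (snd (snd x))"
definition Wf :: "(nat \<Rightarrow> real^'n \<Rightarrow> real^'n^3) \<Rightarrow> (nat \<Rightarrow> real^'n \<Rightarrow> real^'n^3) \<Rightarrow> nat \<Rightarrow> real \<Rightarrow> 'n st \<Rightarrow> real^3" where
  "Wf JP0 JP1 l r x = link_jac JP0 JP1 l r (fst x) *v fst (snd x) - snd (snd (snd x))"
definition DEf :: "(nat \<Rightarrow> real^'n \<Rightarrow> real^'n^3) \<Rightarrow> (nat \<Rightarrow> real^'n \<Rightarrow> real^'n^3) \<Rightarrow> nat \<Rightarrow> real \<Rightarrow> 'n st \<Rightarrow> 'n st \<Rightarrow> real^3" where
  "DEf JP0 JP1 l r x h = link_jac JP0 JP1 l r (fst x) *v fst h - fst (snd (snd h))"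
definition DWf :: "(nat \<Rightarrow> real^'n \<Rightarrow> real^'n^3) \<Rightarrow> (nat \<Rightarrow> real^'n \<Rightarrow> real^'n^3) \<Rightarrow>
    (nat \<Rightarrow> real^'n \<Rightarrow> ((real^'n) \<Rightarrow>\<^sub>L (real^'n^3))) \<Rightarrow> (nat \<Rightarrow> real^'n \<Rightarrow> ((real^'n) \<Rightarrow>\<^sub>L (real^'n^3))) \<Rightarrow>
    nat \<Rightarrow> real \<Rightarrow> 'n st \<Rightarrow> 'n st \<Rightarrow> real^3" where
  "DWf JP0 JP1 DJP0 DJP1 l r x h =
     (DJP0 l (fst x) (fst h) + r *\<^sub>R (DJP1 l (fst x) (fst h) - DJP0 l (fst x) (fst h))) *v fst (snd x)
     + link_jac JP0 JP1 l r (fst x) *v fst (snd h) - snd (snd (snd h))"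
definition gD where
  "gD \<alpha>1' D1\<alpha>2 D2\<alpha>2 P0 P1 JP0 JP1 DJP0 DJP1 l r x h =
     SD \<alpha>1' D1\<alpha>2 D2\<alpha>2 (Ef P0 P1 l r x) (Wf JP0 JP1 l r x) (DEf JP0 JP1 l r x h) (DWf JP0 JP1 DJP0 DJP1 l r x h)"
definition HD where
  "HD \<alpha>1' D1\<alpha>2 D2\<alpha>2 nl P0 P1 JP0 JP1 DJP0 DJP1 x =
     (\<Sum>l = 1..nl + 1. integral (cbox 0 1) (\<lambda>r. Blinfun (gD \<alpha>1' D1\<alpha>2 D2\<alpha>2 P0 P1 JP0 JP1 DJP0 DJP1 l r x)))"

lemma EW_deriv:
  fixes P0 P1 :: "nat \<Rightarrow> real^'n \<Rightarrow> real^3"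
    and JP0 JP1 :: "nat \<Rightarrow> real^'n \<Rightarrow> real^'n^3"
    and DJP0 DJP1 :: "nat \<Rightarrow> real^'n \<Rightarrow> ((real^'n) \<Rightarrow>\<^sub>L (real^'n^3))"
    and x :: "'n st"
  assumes P0_jac: "\<And>l q. (P0 l has_derivative (\<lambda>h. JP0 l q *v h)) (at q)"
    and P1_jac: "\<And>l q. (P1 l has_derivative (\<lambda>h. JP1 l q *v h)) (at q)"
    and JP0_C1: "\<And>l q. (JP0 l has_derivative blinfun_apply (DJP0 l q)) (at q)"
    and JP1_C1: "\<And>l q. (JP1 l has_derivative blinfun_apply (DJP1 l q)) (at q)"
  shows "(Ef P0 P1 l r has_derivative DEf JP0 JP1 l r x) (at x)"
    "(Wf JP0 JP1 l r has_derivative DWf JP0 JP1 DJP0 DJP1 l r x) (at x)"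
proof -
  note mvd = bounded_bilinear.FDERIV[OF mv_bb]
  note c1 = has_derivative_compose[OF _ P0_jac] has_derivative_compose[OF _ P1_jac]
     has_derivative_compose[OF _ JP0_C1] has_derivative_compose[OF _ JP1_C1]
  have f: "((\<lambda>x::'n st. fst x) has_derivative (\<lambda>h. fst h)) (at x)"
    by (rule has_derivative_fst[OF has_derivative_ident])
  show "(Ef P0 P1 l r has_derivative DEf JP0 JP1 l r x) (at x)"
    unfolding Ef_def[abs_def] DEf_def[abs_def] link_point_def link_jac_def
    apply (rule has_derivative_eq_rhs)
     apply (rule derivative_intros c1 f)+
    apply (simp add: fun_eq_iff algebra_simps matrix_vector_mult_add_rdistrib)
    done
  show "(Wf JP0 JP1 l r has_derivative DWf JP0 JP1 DJP0 DJP1 l r x) (at x)"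
    unfolding Wf_def[abs_def] DWf_def[abs_def] link_point_def link_jac_def
    apply (rule has_derivative_eq_rhs)
     apply (rule derivative_intros c1 f mvd)+
    apply (simp add: fun_eq_iff algebra_simps matrix_vector_mult_add_rdistrib)
    done
qed


lemma cont_E:
  assumes "\<And>l. continuous_on UNIV (P0 l)" "\<And>l. continuous_on UNIV (P1 l)"
    "continuous_on S f" "continuous_on S g"
  shows "continuous_on S (\<lambda>z. Ef P0 P1 l (g z) (f z))"
  unfolding Ef_def link_point_def
  by (intro continuous_intros continuous_on_compose2[OF assms(1)] continuous_on_compose2[OF assms(2)] assms(3,4)) auto

lemma cont_W:
  assumes "\<And>l. continuous_on UNIV (JP0 l)" "\<And>l. continuous_on UNIV (JP1 l)"
    "continuous_on S f" "continuous_on S g"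
  shows "continuous_on S (\<lambda>z. Wf JP0 JP1 l (g z) (f z))"
  unfolding Wf_def link_jac_def
  by (intro continuous_intros bounded_bilinear.continuous_on[OF mv_bb] continuous_on_compose2[OF assms(1)] continuous_on_compose2[OF assms(2)] assms(3,4)) auto

lemma cont_DE:
  assumes "\<And>l. continuous_on UNIV (JP0 l)" "\<And>l. continuous_on UNIV (JP1 l)"
    "continuous_on S f" "continuous_on S g"
  shows "continuous_on S (\<lambda>z. DEf JP0 JP1 l (g z) (f z) h)"
  unfolding DEf_def link_jac_def
  by (intro continuous_intros bounded_bilinear.continuous_on[OF mv_bb] continuous_on_compose2[OF assms(1)] continuous_on_compose2[OF assms(2)] assms(3,4)) auto

lemma cont_DW:
  assumes "\<And>l. continuous_on UNIV (JP0 l)" "\<And>l. continuous_on UNIV (JP1 l)"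
    "\<And>l. continuous_on UNIV (DJP0 l)" "\<And>l. continuous_on UNIV (DJP1 l)"
    "continuous_on S f" "continuous_on S g"
  shows "continuous_on S (\<lambda>z. DWf JP0 JP1 DJP0 DJP1 l (g z) (f z) h)"
  unfolding DWf_def link_jac_def
  by (intro continuous_intros bounded_bilinear.continuous_on[OF mv_bb] continuous_on_compose2[OF assms(1)] continuous_on_compose2[OF assms(2)]
      continuous_on_compose2[OF assms(3)] continuous_on_compose2[OF assms(4)] assms(5,6)) auto

lemma H_deriv:
  fixes P0 P1 :: "nat \<Rightarrow> real^'n \<Rightarrow> real^3"
    and JP0 JP1 :: "nat \<Rightarrow> real^'n \<Rightarrow> real^'n^3"
    and DJP0 DJP1 :: "nat \<Rightarrow> real^'n \<Rightarrow> ((real^'n) \<Rightarrow>\<^sub>L (real^'n^3))"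
    and x0 :: "'n st"
  assumes \<alpha>1_cont: "continuous_on UNIV \<alpha>1"
    and \<alpha>1_C1: "\<And>d. (\<alpha>1 has_real_derivative \<alpha>1' d) (at d)" "continuous_on UNIV \<alpha>1'"
    and \<alpha>2_cont: "continuous_on UNIV (\<lambda>(d, dd). \<alpha>2 d dd)"
    and \<alpha>2_C1: "\<And>d dd. ((\<lambda>(x, y). \<alpha>2 x y) has_derivative
                          (\<lambda>(h, k). D1\<alpha>2 d dd * h + D2\<alpha>2 d dd * k)) (at (d, dd))"
                "continuous_on UNIV (\<lambda>(d, dd). D1\<alpha>2 d dd)"
                "continuous_on UNIV (\<lambda>(d, dd). D2\<alpha>2 d dd)"
    and P0_jac: "\<And>l q. (P0 l has_derivative (\<lambda>h. JP0 l q *v h)) (at q)"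
    and P1_jac: "\<And>l q. (P1 l has_derivative (\<lambda>h. JP1 l q *v h)) (at q)"
    and JP0_C1: "\<And>l q. (JP0 l has_derivative blinfun_apply (DJP0 l q)) (at q)"
                "\<And>l. continuous_on UNIV (DJP0 l)"
    and JP1_C1: "\<And>l q. (JP1 l has_derivative blinfun_apply (DJP1 l q)) (at q)"
                "\<And>l. continuous_on UNIV (DJP1 l)"
    and nc: "\<forall>l\<in>{1..nl+1}. \<forall>r\<in>{0..1}. link_point P0 P1 l r (fst x0) \<noteq> fst (snd (snd x0))"
  shows "((\<lambda>x. F_index \<alpha>1 \<alpha>2 nl P0 P1 JP0 JP1 (fst x) (fst (snd x)) (fst (snd (snd x))) (snd (snd (snd x))))
     has_derivative blinfun_apply (HD \<alpha>1' D1\<alpha>2 D2\<alpha>2 nl P0 P1 JP0 JP1 DJP0 DJP1 x0)) (at x0)"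
proof -
  define L where "L = {1..nl+1}"
  have cP0: "continuous_on UNIV (P0 l)" for l
    by (rule continuous_at_imp_continuous_on, rule ballI, rule has_derivative_continuous, rule P0_jac)
  have cP1: "continuous_on UNIV (P1 l)" for l
    by (rule continuous_at_imp_continuous_on, rule ballI, rule has_derivative_continuous, rule P1_jac)
  have cJP0: "continuous_on UNIV (JP0 l)" for l
    by (rule continuous_at_imp_continuous_on, rule ballI, rule has_derivative_continuous, rule JP0_C1(1))
  have cJP1: "continuous_on UNIV (JP1 l)" for l
    by (rule continuous_at_imp_continuous_on, rule ballI, rule has_derivative_continuous, rule JP1_C1(1))
  note cE = cont_E[OF cP0 cP1] and cW = cont_W[OF cJP0 cJP1] and cDE = cont_DE[OF cJP0 cJP1]
    and cDW = cont_DW[OF cJP0 cJP1 JP0_C1(2) JP1_C1(2)]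
  define Wset where "Wset = (\<Inter>l\<in>L. {z::'n st \<times> real. Ef P0 P1 l (snd z) (fst z) \<noteq> 0})"
  have oW: "open Wset" unfolding Wset_def L_def
    by (intro open_INT finite_atLeastAtMost ballI open_Collect_neq cE continuous_on_const continuous_on_fst continuous_on_snd continuous_on_id)
  have sW: "{x0} \<times> cbox 0 (1::real) \<subseteq> Wset"
    using nc by (auto simp: Wset_def L_def Ef_def)
  obtain X0 where "x0 \<in> X0" "open X0" "X0 \<times> cbox 0 (1::real) \<subseteq> Wset"
    using Elementary_Topology.tube_lemma[OF compact_cbox oW sW] by blast
  then obtain e where e: "e > 0" "ball x0 e \<subseteq> X0" by (meson openE)
  define U where "U = ball x0 e"
  have U: "x0 \<in> U" "convex U" "open U" using e by (auto simp: U_def)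
  have nzU: "Ef P0 P1 l r x \<noteq> 0" if "x \<in> U" "r \<in> cbox 0 1" "l \<in> L" for x r l
  proof -
    have "x \<in> X0" using that(1) e by (auto simp: U_def)
    then have "(x, r) \<in> Wset" using that(2) \<open>X0 \<times> cbox 0 (1::real) \<subseteq> Wset\<close> by blast
    then show ?thesis using that(3) by (simp add: Wset_def)
  qed
  define fl where "fl l x r = \<alpha>1 (norm (Ef P0 P1 l r x)) + \<alpha>2 (norm (Ef P0 P1 l r x))
      ((Ef P0 P1 l r x \<bullet> Wf JP0 JP1 l r x) / norm (Ef P0 P1 l r x))" for l x r
  have Feq: "F_index \<alpha>1 \<alpha>2 nl P0 P1 JP0 JP1 (fst x) (fst (snd x)) (fst (snd (snd x))) (snd (snd (snd x)))
     = (\<Sum>l\<in>L. integral (cbox 0 1) (fl l x))" for x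
    by (simp add: F_index_def L_def fl_def[abs_def] safety_index_def dist_ho_def dist_rate_def Ef_def Wf_def cbox_interval)
  have dl: "((\<lambda>x. fl l x r) has_derivative gD \<alpha>1' D1\<alpha>2 D2\<alpha>2 P0 P1 JP0 JP1 DJP0 DJP1 l r x) (at x)"
    if "x \<in> U" "r \<in> cbox 0 1" "l \<in> L" for l x r
    unfolding fl_def gD_def
    by (rule SD_deriv[OF \<alpha>1_C1(1) \<alpha>2_C1(1) EW_deriv[OF P0_jac P1_jac JP0_C1(1) JP1_C1(1)] nzU[OF that]])
  have lead: "((\<lambda>x. integral (cbox 0 1) (fl l x)) has_derivative
      blinfun_apply (integral (cbox 0 1) (\<lambda>r. Blinfun (gD \<alpha>1' D1\<alpha>2 D2\<alpha>2 P0 P1 JP0 JP1 DJP0 DJP1 l r x0)))) (at x0)"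
    if l: "l \<in> L" for l
  proof -
    have "((\<lambda>x. integral (cbox 0 1) (fl l x)) has_derivative
      blinfun_apply (integral (cbox 0 1) (\<lambda>r. Blinfun (gD \<alpha>1' D1\<alpha>2 D2\<alpha>2 P0 P1 JP0 JP1 DJP0 DJP1 l r x0)))) (at x0 within U)"
    proof (rule leibniz_rule[OF _ _ _ U(1,2)])
      fix x r assume xr: "x \<in> U" "(r::real) \<in> cbox 0 1"
      have d: "((\<lambda>x. fl l x r) has_derivative gD \<alpha>1' D1\<alpha>2 D2\<alpha>2 P0 P1 JP0 JP1 DJP0 DJP1 l r x) (at x)"
        using dl[OF xr l] .
      show "((\<lambda>x. fl l x r) has_derivative blinfun_apply (Blinfun (gD \<alpha>1' D1\<alpha>2 D2\<alpha>2 P0 P1 JP0 JP1 DJP0 DJP1 l r x))) (at x within U)"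
        using d bounded_linear_Blinfun_apply[OF has_derivative_bounded_linear[OF d]]
        by (simp add: has_derivative_at_withinI)
    next
      fix x assume x: "x \<in> U"
      have "continuous_on (cbox 0 1) (fl l x)"
        unfolding fl_def
      proof -
        have c1: "continuous_on (cbox 0 1) (\<lambda>r. Ef P0 P1 l r x)" "continuous_on (cbox 0 1) (\<lambda>r. Wf JP0 JP1 l r x)"
          by (intro cE cW continuous_intros)+
        have n: "\<forall>r\<in>cbox 0 1. norm (Ef P0 P1 l r x) \<noteq> 0" using nzU[OF x _ l] by auto
        have cn: "continuous_on (cbox 0 1) (\<lambda>r. norm (Ef P0 P1 l r x))" by (intro continuous_intros c1)
        have cq: "continuous_on (cbox 0 1) (\<lambda>r. (Ef P0 P1 l r x \<bullet> Wf JP0 JP1 l r x) / norm (Ef P0 P1 l r x))"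
          by (intro continuous_intros c1 n)
        show "continuous_on (cbox 0 1) (\<lambda>r. \<alpha>1 (norm (Ef P0 P1 l r x)) + \<alpha>2 (norm (Ef P0 P1 l r x))
           ((Ef P0 P1 l r x \<bullet> Wf JP0 JP1 l r x) / norm (Ef P0 P1 l r x)))"
        proof (rule continuous_on_add)
          show "continuous_on (cbox 0 1) (\<lambda>r. \<alpha>1 (norm (Ef P0 P1 l r x)))"
            using continuous_on_compose2[OF \<alpha>1_cont cn] by simp
          show "continuous_on (cbox 0 1) (\<lambda>r. \<alpha>2 (norm (Ef P0 P1 l r x)) ((Ef P0 P1 l r x \<bullet> Wf JP0 JP1 l r x) / norm (Ef P0 P1 l r x)))"
            using continuous_on_compose2[OF \<alpha>2_cont continuous_on_Pair[OF cn cq]] by simp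
        qed
      qed
      then show "fl l x integrable_on cbox 0 1" by (rule integrable_continuous)
    next
      show "continuous_on (U \<times> cbox 0 1) (\<lambda>(x, r). Blinfun (gD \<alpha>1' D1\<alpha>2 D2\<alpha>2 P0 P1 JP0 JP1 DJP0 DJP1 l r x))"
      proof (rule continuous_on_blinfun_componentwise)
        fix i :: "'n st" assume "i \<in> Basis"
        have eq: "blinfun_apply (case z of (x, r) \<Rightarrow> Blinfun (gD \<alpha>1' D1\<alpha>2 D2\<alpha>2 P0 P1 JP0 JP1 DJP0 DJP1 l r x)) i
           = gD \<alpha>1' D1\<alpha>2 D2\<alpha>2 P0 P1 JP0 JP1 DJP0 DJP1 l (snd z) (fst z) i" if "z \<in> U \<times> cbox 0 1" for z
        proof -
          obtain x r where z: "z = (x, r)" by fastforce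
          have d: "((\<lambda>x. fl l x r) has_derivative gD \<alpha>1' D1\<alpha>2 D2\<alpha>2 P0 P1 JP0 JP1 DJP0 DJP1 l r x) (at x)"
            using dl[of x r l] that l z by auto
          show ?thesis using bounded_linear_Blinfun_apply[OF has_derivative_bounded_linear[OF d]] z by simp
        qed
        have "continuous_on (U \<times> cbox 0 1) (\<lambda>z. gD \<alpha>1' D1\<alpha>2 D2\<alpha>2 P0 P1 JP0 JP1 DJP0 DJP1 l (snd z) (fst z) i)"
          unfolding gD_def
          by (rule SD_cont[OF \<alpha>1_C1(2) \<alpha>2_C1(2,3)] cE cW cDE cDW continuous_intros)+
            (use nzU l in auto)
        then show "continuous_on (U \<times> cbox 0 1) (\<lambda>z. blinfun_apply (case z of (x, r) \<Rightarrow> Blinfun (gD \<alpha>1' D1\<alpha>2 D2\<alpha>2 P0 P1 JP0 JP1 DJP0 DJP1 l r x)) i)"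
          by (rule continuous_on_eq) (simp add: eq)
      qed
    qed
    then show ?thesis using at_within_open[OF U(1,3)] by simp
  qed
  show ?thesis
    unfolding Feq HD_def L_def[symmetric]
    apply (rule has_derivative_eq_rhs)
     apply (rule has_derivative_sum)
     apply (rule lead, assumption)
    apply (simp add: fun_eq_iff blinfun.sum_left)
    done
qed

theorem lemma1:
  fixes i :: "'N::finite"
    and kin :: "real^'n \<Rightarrow> real^'p"
    and J :: "real^'n \<Rightarrow> real^'n^'p"
    and J\<sigma> :: "real^('N \<times> 'p)^'m"
    and \<sigma>n \<sigma>n1 \<sigma>n2 :: "real \<Rightarrow> real^'m"
    and k\<sigma> l\<sigma> :: real
    and \<alpha>1 \<alpha>1' :: "real \<Rightarrow> real"
    and \<alpha>2 D1\<alpha>2 D2\<alpha>2 :: "real \<Rightarrow> real \<Rightarrow> real"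
    and c :: real
    and nl :: nat
    and P0 P1 :: "nat \<Rightarrow> real^'n \<Rightarrow> real^3"
    and JP0 JP1 :: "nat \<Rightarrow> real^'n \<Rightarrow> real^'n^3"
    and DJP0 DJP1 :: "nat \<Rightarrow> real^'n \<Rightarrow> ((real^'n) \<Rightarrow>\<^sub>L (real^'n^3))"
  assumes kin_jac: "\<And>q. (kin has_derivative (\<lambda>h. J q *v h)) (at q)"
    and J_diff: "\<And>q. J differentiable (at q)"
    and \<sigma>n_d1: "\<And>s. (\<sigma>n has_vector_derivative \<sigma>n1 s) (at s)"
    and \<sigma>n_d2: "\<And>s. (\<sigma>n1 has_vector_derivative \<sigma>n2 s) (at s)"
    and \<sigma>n_C2: "continuous_on UNIV \<sigma>n2"
    and k\<sigma>_pos: "k\<sigma> > 0" and l\<sigma>_pos: "l\<sigma> > 0"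
    and \<alpha>1_nonneg: "\<And>d. \<alpha>1 d \<ge> 0"
    and \<alpha>1_cont: "continuous_on UNIV \<alpha>1"
    and \<alpha>1_mono: "mono \<alpha>1"
    and \<alpha>1_C1: "\<And>d. (\<alpha>1 has_real_derivative \<alpha>1' d) (at d)" "continuous_on UNIV \<alpha>1'"
    and \<alpha>2_cont: "continuous_on UNIV (\<lambda>(d, dd). \<alpha>2 d dd)"
    and \<alpha>2_mono: "\<And>d. mono (\<alpha>2 d)"
    and c_pos: "c > 0"
    and \<alpha>2_lim: "\<And>d. (\<alpha>2 d \<longlongrightarrow> c) at_top"
    and \<alpha>2_C1: "\<And>d dd. ((\<lambda>(x, y). \<alpha>2 x y) has_derivative
                          (\<lambda>(h, k). D1\<alpha>2 d dd * h + D2\<alpha>2 d dd * k)) (at (d, dd))"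
                "continuous_on UNIV (\<lambda>(d, dd). D1\<alpha>2 d dd)"
                "continuous_on UNIV (\<lambda>(d, dd). D2\<alpha>2 d dd)"
    and \<alpha>2_partial_nz: "\<And>d dd. D2\<alpha>2 d dd \<noteq> 0"
    and P0_jac: "\<And>l q. (P0 l has_derivative (\<lambda>h. JP0 l q *v h)) (at q)"
    and P1_jac: "\<And>l q. (P1 l has_derivative (\<lambda>h. JP1 l q *v h)) (at q)"
    and JP0_C1: "\<And>l q. (JP0 l has_derivative blinfun_apply (DJP0 l q)) (at q)"
                "\<And>l. continuous_on UNIV (DJP0 l)"
    and JP1_C1: "\<And>l q. (JP1 l has_derivative blinfun_apply (DJP1 l q)) (at q)"
                "\<And>l. continuous_on UNIV (DJP1 l)"
  shows "\<exists>(\<mu>1 :: real^'n \<Rightarrow> real^'n \<Rightarrow> real^3 \<Rightarrow> real^3 \<Rightarrow> real \<Rightarrow> real)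
          (\<mu>2 :: real^'n \<Rightarrow> real^'n \<Rightarrow> real^3 \<Rightarrow> real^3 \<Rightarrow> real^3 \<Rightarrow> real^'n \<Rightarrow>
                 real \<Rightarrow> real \<Rightarrow> real^'m \<Rightarrow> real^'m \<Rightarrow> real).
     \<forall>(q :: real \<Rightarrow> real^'n) qd qdd (qn :: real \<Rightarrow> real^'n)
       (s :: real \<Rightarrow> real) sd sdd (po :: real \<Rightarrow> real^3) pod podd
       (X :: real \<Rightarrow> real^('N \<times> 'p)) Xd.
       (\<forall>t. (q has_vector_derivative qd t) (at t)) \<and>
       (\<forall>t. (qd has_vector_derivative qdd t) (at t)) \<and>
       (\<forall>t. (s has_real_derivative sd t) (at t)) \<and>
       (\<forall>t. (sd has_real_derivative sdd t) (at t)) \<and>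
       (\<forall>t. (po has_vector_derivative pod t) (at t)) \<and>
       (\<forall>t. (pod has_vector_derivative podd t) (at t)) \<and>
       (\<forall>t. (X has_vector_derivative Xd t) (at t)) \<and>
       (\<forall>t a. X t $ (i, a) = kin (q t) $ a) \<and>
       (\<forall>t. J (q t) *v qn t = 0) \<and>
       (\<forall>t. qdd t =
           pinv (J (q t)) *v
             (Gamma i *v (pinv J\<sigma> *v
                ((sd t)\<^sup>2 *\<^sub>R \<sigma>n2 (s t) + sdd t *\<^sub>R \<sigma>n1 (s t)
                 + k\<sigma> *\<^sub>R (sd t *\<^sub>R \<sigma>n1 (s t) - J\<sigma> *v Xd t)
                 + l\<sigma> *\<^sub>R (\<sigma>n (s t) - J\<sigma> *v X t)))
              - vector_derivative (\<lambda>\<tau>. J (q \<tau>)) (at t) *v qd t)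
           + qn t) \<and>
       (\<forall>t l r. l \<in> {1..nl + 1} \<longrightarrow> r \<in> {0..1} \<longrightarrow> link_point P0 P1 l r (q t) \<noteq> po t)
       \<longrightarrow>
       (\<forall>t. ((\<lambda>\<tau>. F_index \<alpha>1 \<alpha>2 nl P0 P1 JP0 JP1 (q \<tau>) (qd \<tau>) (po \<tau>) (pod \<tau>))
              has_real_derivative
                (\<mu>1 (q t) (qd t) (po t) (pod t) (s t) * sdd t
                 + \<mu>2 (q t) (qd t) (po t) (pod t) (podd t) (qn t) (s t) (sd t)
                      (\<sigma>n (s t) - J\<sigma> *v X t) (sd t *\<^sub>R \<sigma>n1 (s t) - J\<sigma> *v Xd t))) (at t))"
proof -
  define A where "A Q S = pinv (J Q) *v (Gamma i *v (pinv J\<sigma> *v \<sigma>n1 S))" for Q S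
  define B where "B Q Qd Qn S Sd E Ed = pinv (J Q) *v (Gamma i *v (pinv J\<sigma> *v
        ((Sd)\<^sup>2 *\<^sub>R \<sigma>n2 S + k\<sigma> *\<^sub>R Ed + l\<sigma> *\<^sub>R E)) - frechet_derivative J (at Q) Qd *v Qd) + Qn"
    for Q Qd Qn S Sd E Ed
  define HH where "HH = HD \<alpha>1' D1\<alpha>2 D2\<alpha>2 nl P0 P1 JP0 JP1 DJP0 DJP1"
  show ?thesis
  proof (intro exI allI impI)
    fix q :: "real \<Rightarrow> real^'n" and qd qdd qn :: "real \<Rightarrow> real^'n"
      and s sd sdd :: "real \<Rightarrow> real" and po pod podd :: "real \<Rightarrow> real^3"
      and X Xd :: "real \<Rightarrow> real^('N \<times> 'p)" and t :: real
    assume H: "(\<forall>t. (q has_vector_derivative qd t) (at t)) \<and>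
       (\<forall>t. (qd has_vector_derivative qdd t) (at t)) \<and>
       (\<forall>t. (s has_real_derivative sd t) (at t)) \<and>
       (\<forall>t. (sd has_real_derivative sdd t) (at t)) \<and>
       (\<forall>t. (po has_vector_derivative pod t) (at t)) \<and>
       (\<forall>t. (pod has_vector_derivative podd t) (at t)) \<and>
       (\<forall>t. (X has_vector_derivative Xd t) (at t)) \<and>
       (\<forall>t a. X t $ (i, a) = kin (q t) $ a) \<and>
       (\<forall>t. J (q t) *v qn t = 0) \<and>
       (\<forall>t. qdd t =
           pinv (J (q t)) *v
             (Gamma i *v (pinv J\<sigma> *v
                ((sd t)\<^sup>2 *\<^sub>R \<sigma>n2 (s t) + sdd t *\<^sub>R \<sigma>n1 (s t)
                 + k\<sigma> *\<^sub>R (sd t *\<^sub>R \<sigma>n1 (s t) - J\<sigma> *v Xd t)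
                 + l\<sigma> *\<^sub>R (\<sigma>n (s t) - J\<sigma> *v X t)))
              - vector_derivative (\<lambda>\<tau>. J (q \<tau>)) (at t) *v qd t)
           + qn t) \<and>
       (\<forall>t l r. l \<in> {1..nl + 1} \<longrightarrow> r \<in> {0..1} \<longrightarrow> link_point P0 P1 l r (q t) \<noteq> po t)"
    then have hq: "\<And>t. (q has_vector_derivative qd t) (at t)"
      and hqd: "\<And>t. (qd has_vector_derivative qdd t) (at t)"
      and hpo: "\<And>t. (po has_vector_derivative pod t) (at t)"
      and hpod: "\<And>t. (pod has_vector_derivative podd t) (at t)"
      and hqdd: "\<And>t. qdd t =
           pinv (J (q t)) *v
             (Gamma i *v (pinv J\<sigma> *v
                ((sd t)\<^sup>2 *\<^sub>R \<sigma>n2 (s t) + sdd t *\<^sub>R \<sigma>n1 (s t)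
                 + k\<sigma> *\<^sub>R (sd t *\<^sub>R \<sigma>n1 (s t) - J\<sigma> *v Xd t)
                 + l\<sigma> *\<^sub>R (\<sigma>n (s t) - J\<sigma> *v X t)))
              - vector_derivative (\<lambda>\<tau>. J (q \<tau>)) (at t) *v qd t)
           + qn t"
      and hnc: "\<And>t l r. l \<in> {1..nl + 1} \<Longrightarrow> r \<in> {0..1} \<Longrightarrow> link_point P0 P1 l r (q t) \<noteq> po t"
      by blast+
    define \<gamma> where "\<gamma> \<tau> = (q \<tau>, qd \<tau>, po \<tau>, pod \<tau>)" for \<tau>
    have hg: "(\<gamma> has_vector_derivative (qd t, qdd t, pod t, podd t)) (at t)"
      unfolding \<gamma>_def by (intro has_vector_derivative_Pair hq hqd hpo hpod)
    have hH: "((\<lambda>x. F_index \<alpha>1 \<alpha>2 nl P0 P1 JP0 JP1 (fst x) (fst (snd x)) (fst (snd (snd x))) (snd (snd (snd x))))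
        has_derivative blinfun_apply (HH (\<gamma> t))) (at (\<gamma> t))"
      unfolding HH_def
      by (rule H_deriv[OF \<alpha>1_cont \<alpha>1_C1 \<alpha>2_cont \<alpha>2_C1 P0_jac P1_jac JP0_C1 JP1_C1])
        (use hnc in \<open>auto simp: \<gamma>_def\<close>)
    have ch: "((\<lambda>\<tau>. F_index \<alpha>1 \<alpha>2 nl P0 P1 JP0 JP1 (q \<tau>) (qd \<tau>) (po \<tau>) (pod \<tau>))
        has_vector_derivative blinfun_apply (HH (\<gamma> t)) (qd t, qdd t, pod t, podd t)) (at t)"
      using vector_derivative_diff_chain_within[OF hg has_derivative_at_withinI[OF hH]] by (simp add: o_def \<gamma>_def)
    have vJ: "vector_derivative (\<lambda>\<tau>. J (q \<tau>)) (at t) = frechet_derivative J (at (q t)) (qd t)"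
    proof -
      have "(J has_derivative frechet_derivative J (at (q t))) (at (q t))"
        using J_diff frechet_derivative_works by blast
      then have "((J \<circ> q) has_vector_derivative frechet_derivative J (at (q t)) (qd t)) (at t)"
        using vector_derivative_diff_chain_within[OF hq has_derivative_at_withinI] by blast
      then show ?thesis using vector_derivative_at by (simp add: o_def)
    qed
    have qdd_eq: "qdd t = sdd t *\<^sub>R A (q t) (s t) + B (q t) (qd t) (qn t) (s t) (sd t) (\<sigma>n (s t) - J\<sigma> *v X t) (sd t *\<^sub>R \<sigma>n1 (s t) - J\<sigma> *v Xd t)"
      unfolding hqdd A_def B_def vJ
      by (simp add: algebra_simps)
    have "(qd t, qdd t, pod t, podd t) = sdd t *\<^sub>R (0, A (q t) (s t), 0, 0) +
        (qd t, B (q t) (qd t) (qn t) (s t) (sd t) (\<sigma>n (s t) - J\<sigma> *v X t) (sd t *\<^sub>R \<sigma>n1 (s t) - J\<sigma> *v Xd t), pod t, podd t)"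
      by (simp add: qdd_eq)
    then have "blinfun_apply (HH (\<gamma> t)) (qd t, qdd t, pod t, podd t) =
       sdd t * blinfun_apply (HH (\<gamma> t)) (0, A (q t) (s t), 0, 0) +
       blinfun_apply (HH (\<gamma> t)) (qd t, B (q t) (qd t) (qn t) (s t) (sd t) (\<sigma>n (s t) - J\<sigma> *v X t) (sd t *\<^sub>R \<sigma>n1 (s t) - J\<sigma> *v Xd t), pod t, podd t)"
      by (subst \<open>(qd t, qdd t, pod t, podd t) = _\<close>) (simp only: blinfun.add_right blinfun.scaleR_right real_scaleR_def)
    with ch show "((\<lambda>\<tau>. F_index \<alpha>1 \<alpha>2 nl P0 P1 JP0 JP1 (q \<tau>) (qd \<tau>) (po \<tau>) (pod \<tau>)) has_real_derivative
         ((\<lambda>Q Qd Po Pod S. blinfun_apply (HH (Q, Qd, Po, Pod)) (0, A Q S, 0, 0)) (q t) (qd t) (po t) (pod t) (s t) * sdd t +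
          (\<lambda>Q Qd Po Pod Podd Qn S Sd E Ed. blinfun_apply (HH (Q, Qd, Po, Pod)) (Qd, B Q Qd Qn S Sd E Ed, Pod, Podd))
            (q t) (qd t) (po t) (pod t) (podd t) (qn t) (s t) (sd t) (\<sigma>n (s t) - J\<sigma> *v X t) (sd t *\<^sub>R \<sigma>n1 (s t) - J\<sigma> *v Xd t)))
       (at t)"
      by (simp add: has_real_derivative_iff_has_vector_derivative \<gamma>_def mult.commute)
  qed
qed

end
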